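(* Let $k\ge2$, $n>2^k$, $c=2^k-2$, and assume $d=\gcd(c,n-1)>1$; let $w=(n-1)/d$. Define $y\in\mathbb{R}^V$ by $y_v=0$ if $v=m d$ for some integer $m\ge 0$, and $y_v=\frac{1}{w(d-1)}$ otherwise. Then $y$ is a probability distribution on $V$, $\sum_{v\in C(T)}y_v\le \frac{c}{n-1}$ for every $T\in\mathcal{T}_k$, and $\max_{T\in\mathcal{T}_k}\sum_{v\in C(T)}y_v=\frac{c}{n-1}$. Hence the pair $(x,y)$ is a Nash equilibrium of the search game, where $x$ is the output of the Greedy Algorithm.
   Context: $G$ is the path graph with $V=\{0,\dots,n-1\}$ and edges $\{v,v+1\}$, $0\le v\le n-2$. A search strategy for a tree $H$ is a rooted binary tree defined recursively: a single node is a search strategy for any $H$; otherwise the root is labeled with an edge $uv$ of $H$ and its two child subtrees are search strategies for the components $H_u,H_v$ of $H-uv$ containing $u,v$. Nodes get vertex sets: root gets $V(H)$, children of a root labeled $uv$ get $V(H_u),V(H_v)$, recursively. $C(T)$ (covered set) is the set of $v$ with $V(\lambda)=\{v\}$ for a leaf $\lambda$ of $T$. $\mathcal{T}_k$ is the set of search strategies for $G$ of height (max root-to-leaf edge count) at most $k$. Intervals: $[u\oplus\ell]_r=\{w\bmod r: u\le w\le u+\ell-1\}$, subscript omitted when $r=n$. For $v\in V\setminus\{1\}$, $T_v\in\mathcal{T}_k$ denotes a strategy with $C(T_v)=[v\oplus(c+1)]$ if this interval meets $\{0,n-1\}$ and $C(T_v)=[v\oplus c]$ otherwise (such strategies exist).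 Greedy Algorithm: $v=c+1$, $\mathcal{X}=\{T_0\}$; while $v\notin\{0,1\}$: add $T_v$ to $\mathcal{X}$, set $v=(v+c)\bmod(n-1)$. Output $x$ uniform on $\mathcal{X}$. The search game: the seeker chooses $x\in\Delta_k$ (distribution on $\mathcal{T}_k$), the hider $y\in\Delta_V$ (distribution on $V$); the seeker's payoff (hider's cost) is $\sum_{T}\sum_{v} x_T y_v\,\mathbf 1[v\in C(T)]$. A Nash equilibrium is a pair $(x,y)$ where neither player can improve unilaterally. *)

theory Defs
  imports Main "HOL-Library.Multiset" Complex_Main
begin

text \<open>Path graph G on V = {0..<n}, edges {v, v+1}. The sub-paths arising in a search
strategy are intervals {a..b}. A search strategy is a rooted binary tree; an inner node
labelled e stands for the edge {e, e+1}; its left child is a strategy for the component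
{a..e} (containing e), its right child for {e+1..b} (containing e+1).\<close>

datatype stree = Leaf | Node nat stree stree

fun valid :: "nat \<Rightarrow> nat \<Rightarrow> stree \<Rightarrow> bool" where
  "valid a b Leaf = (a \<le> b)"
| "valid a b (Node e L R) = (a \<le> e \<and> e < b \<and> valid a e L \<and> valid (Suc e) b R)"

text \<open>Covered set: vertices v such that some leaf has vertex set {v}.\<close>
fun cov :: "nat \<Rightarrow> nat \<Rightarrow> stree \<Rightarrow> nat set" where
  "cov a b Leaf = (if a = b then {a} else {})"
| "cov a b (Node e L R) = cov a e L \<union> cov (Suc e) b R"

fun height :: "stree \<Rightarrow> nat" where
  "height Leaf = 0"
| "height (Node e L R) = Suc (max (height L) (height R))"

definition C :: "nat \<Rightarrow> stree \<Rightarrow> nat set" where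
  "C n T = cov 0 (n - 1) T"

definition strategies :: "nat \<Rightarrow> nat \<Rightarrow> stree set" where
  "strategies n k = {T. valid 0 (n - 1) T \<and> height T \<le> k}"

definition ival :: "nat \<Rightarrow> nat \<Rightarrow> nat \<Rightarrow> nat set" where
  "ival u l r = {w mod r | w. u \<le> w \<and> w < u + l}"

definition Tv_cover :: "nat \<Rightarrow> nat \<Rightarrow> nat \<Rightarrow> nat set" where
  "Tv_cover n c v = (if ival v (c + 1) n \<inter> {0, n - 1} \<noteq> {} then ival v (c + 1) n else ival v c n)"

fun gseq :: "nat \<Rightarrow> nat \<Rightarrow> nat \<Rightarrow> nat" where
  "gseq n c 0 = c + 1"
| "gseq n c (Suc j) = (gseq n c j + c) mod (n - 1)"

text \<open>Vertices v for which T_v is added to \<X> (including v = 0 for the initial T_0):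
the loop adds T_{v_j} exactly when none of v_0, ..., v_j lies in {0,1}.\<close>
definition greedy_verts :: "nat \<Rightarrow> nat \<Rightarrow> nat set" where
  "greedy_verts n c = {0} \<union> {gseq n c j | j. \<forall>i\<le>j. gseq n c i \<notin> {0, 1}}"

definition greedy_set :: "nat \<Rightarrow> nat \<Rightarrow> (nat \<Rightarrow> stree) \<Rightarrow> stree set" where
  "greedy_set n c Tv = Tv ` greedy_verts n c"

definition greedy_x :: "nat \<Rightarrow> nat \<Rightarrow> (nat \<Rightarrow> stree) \<Rightarrow> stree \<Rightarrow> real" where
  "greedy_x n c Tv T = (if T \<in> greedy_set n c Tv then 1 / real (card (greedy_set n c Tv)) else 0)"

definition prob_dist :: "'a set \<Rightarrow> ('a \<Rightarrow> real) \<Rightarrow> bool" where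
  "prob_dist S p \<longleftrightarrow> (\<forall>s\<in>S. 0 \<le> p s) \<and> (\<Sum>s\<in>S. p s) = 1"

definition payoff :: "nat \<Rightarrow> nat \<Rightarrow> (stree \<Rightarrow> real) \<Rightarrow> (nat \<Rightarrow> real) \<Rightarrow> real" where
  "payoff n k x y = (\<Sum>T\<in>strategies n k. \<Sum>v\<in>{0..<n}. x T * y v * (if v \<in> C n T then 1 else 0))"

definition nash :: "nat \<Rightarrow> nat \<Rightarrow> (stree \<Rightarrow> real) \<Rightarrow> (nat \<Rightarrow> real) \<Rightarrow> bool" where
  "nash n k x y \<longleftrightarrow> prob_dist (strategies n k) x \<and> prob_dist {0..<n} y \<and>
     (\<forall>x'. prob_dist (strategies n k) x' \<longrightarrow> payoff n k x' y \<le> payoff n k x y) \<and>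
     (\<forall>y'. prob_dist {0..<n} y' \<longrightarrow> payoff n k x y \<le> payoff n k x y')"

end

theory Submission
  imports Defs
begin


lemma cov_mem: "valid a b T \<Longrightarrow> x \<in> cov a b T \<Longrightarrow> a \<le> x \<and> x \<le> b"
proof (induction T arbitrary: a b)
  case Leaf then show ?case by (auto split: if_splits)
next
  case (Node e L R)
  then have "x \<in> cov a e L \<or> x \<in> cov (Suc e) b R" by simp
  then show ?case
  proof
    assume "x \<in> cov a e L" then show ?thesis using Node.IH(1)[of a e] Node.prems by auto
  next
    assume "x \<in> cov (Suc e) b R" then show ?thesis using Node.IH(2)[of "Suc e" b] Node.prems by auto
  qed
qed

lemma cov_sub: "valid a b T \<Longrightarrow> cov a b T \<subseteq> {a..b}"
  using cov_mem by fastforce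

definition qt :: "nat set \<Rightarrow> nat \<Rightarrow> nat \<Rightarrow> nat" where
  "qt S a u = (if u \<in> S then 1 else 0) + (if u \<in> S \<and> a < u \<and> u - 1 \<notin> S then 1 else 0)"

definition Qv :: "nat set \<Rightarrow> nat \<Rightarrow> nat \<Rightarrow> nat" where
  "Qv S a b = (\<Sum>u\<in>{a..b}. qt S a u) + (if b \<in> S then 0 else 1)"

lemma Qv_tree: "valid a b T \<Longrightarrow> height T \<le> h \<Longrightarrow> Qv (cov a b T) a b \<le> 2 ^ h"
proof (induction T arbitrary: a b h)
  case Leaf
  then show ?case by (cases "a = b") (auto simp: Qv_def qt_def)
next
  case (Node e L R)
  obtain h' where h: "h = Suc h'" using Node.prems by (cases h) auto
  have vL: "valid a e L" and vR: "valid (Suc e) b R" and ae: "a \<le> e" and eb: "e < b"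
    using Node.prems by auto
  have hL: "height L \<le> h'" and hR: "height R \<le> h'" using Node.prems h by auto
  define S1 where "S1 = cov a e L"
  define S2 where "S2 = cov (Suc e) b R"
  have S1s: "S1 \<subseteq> {a..e}" using cov_sub[OF vL] S1_def by auto
  have S2s: "S2 \<subseteq> {Suc e..b}" using cov_sub[OF vR] S2_def by auto
  have IH1: "Qv S1 a e \<le> 2 ^ h'" using Node.IH(1)[OF vL hL] S1_def by simp
  have IH2: "Qv S2 (Suc e) b \<le> 2 ^ h'" using Node.IH(2)[OF vR hR] S2_def by simp
  define S where "S = S1 \<union> S2"
  have covS: "cov a b (Node e L R) = S" by (simp add: S_def S1_def S2_def)
  have split: "{a..b} = {a..e} \<union> {Suc e..b}" using ae eb by auto
  have s1: "(\<Sum>u\<in>{a..e}. qt S a u) = (\<Sum>u\<in>{a..e}. qt S1 a u)"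
  proof (rule sum.cong)
    fix u assume u: "u \<in> {a..e}"
    have "\<forall>x\<in>S2. Suc e \<le> x" using S2s by auto
    then have "u \<notin> S2" "u - 1 \<notin> S2" using u by force+
    then show "qt S a u = qt S1 a u" by (simp add: qt_def S_def)
  qed simp
  have s2a: "(\<Sum>u\<in>{Suc e..b}. qt S a u) = qt S a (Suc e) + (\<Sum>u\<in>{Suc (Suc e)..b}. qt S a u)"
    using eb by (simp add: sum.atLeast_Suc_atMost)
  have s2b: "(\<Sum>u\<in>{Suc e..b}. qt S2 (Suc e) u) = qt S2 (Suc e) (Suc e) + (\<Sum>u\<in>{Suc (Suc e)..b}. qt S2 (Suc e) u)"
    using eb by (simp add: sum.atLeast_Suc_atMost)
  have s2c: "(\<Sum>u\<in>{Suc (Suc e)..b}. qt S a u) = (\<Sum>u\<in>{Suc (Suc e)..b}. qt S2 (Suc e) u)"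
  proof (rule sum.cong)
    fix u assume u: "u \<in> {Suc (Suc e)..b}"
    have "\<forall>x\<in>S1. x \<le> e" using S1s by auto
    then have "u \<notin> S1" "u - 1 \<notin> S1" using u by force+
    then show "qt S a u = qt S2 (Suc e) u" using u ae by (auto simp: qt_def S_def)
  qed simp
  have q1: "qt S a (Suc e) = qt S2 (Suc e) (Suc e) + (if Suc e \<in> S2 \<and> e \<notin> S1 then 1 else 0)"
    using S1s S2s ae by (auto simp: qt_def S_def)
  have bS: "(b \<in> S) = (b \<in> S2)" using S1s eb S_def by auto
  have eS: "Suc e \<in> S2 \<Longrightarrow> True" by simp
  have "Qv S a b = (\<Sum>u\<in>{a..e}. qt S1 a u) + (\<Sum>u\<in>{Suc e..b}. qt S2 (Suc e) u)
        + (if Suc e \<in> S2 \<and> e \<notin> S1 then 1 else 0) + (if b \<in> S2 then 0 else 1)"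
    unfolding Qv_def split using s1 s2a s2b s2c q1 bS
    by (subst sum.union_disjoint) auto
  also have "\<dots> \<le> 2 ^ h' + 2 ^ h'"
    using IH1 IH2 unfolding Qv_def by (auto split: if_splits)
  finally show ?case using covS h by simp
qed



lemma sweep:
  fixes D :: nat
  shows "Suc D * (\<Sum>u\<in>{0..m}. if u \<in> S \<and> \<not> Suc D dvd u then 1 else 0)
     + (if m \<in> S then D - m mod Suc D else 0) \<le> D * (\<Sum>u\<in>{0..m}. qt S 0 u)"
proof (induction m)
  case 0
  then show ?case by (simp add: qt_def)
next
  case (Suc m)
  define N where "N = (\<Sum>u\<in>{0..m}. if u \<in> S \<and> \<not> Suc D dvd u then 1 else 0::nat)"
  define P where "P = (\<Sum>u\<in>{0..m}. qt S 0 u)"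
  have IH: "Suc D * N + (if m \<in> S then D - m mod Suc D else 0) \<le> D * P"
    using Suc.IH by (simp add: N_def P_def)
  have mlt: "m mod Suc D < Suc D" by simp
  have ms: "Suc m mod Suc D = (if Suc (m mod Suc D) = Suc D then 0 else Suc (m mod Suc D))"
    by (rule mod_Suc)
  have dv: "Suc D dvd Suc m \<longleftrightarrow> Suc m mod Suc D = 0" by (simp add: dvd_eq_mod_eq_0)
  have q: "qt S 0 (Suc m) = (if Suc m \<in> S then 1 else 0) + (if Suc m \<in> S \<and> m \<notin> S then 1 else 0)"
    by (simp add: qt_def)
  show ?case
    unfolding sum.atLeast0_atMost_Suc N_def[symmetric] P_def[symmetric] q
  proof (cases "Suc m \<in> S")
    case False
    then show "Suc D * (N + (if Suc m \<in> S \<and> \<not> Suc D dvd Suc m then 1 else 0)) +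
      (if Suc m \<in> S then D - Suc m mod Suc D else 0)
      \<le> D * (P + ((if Suc m \<in> S then 1 else 0) + (if Suc m \<in> S \<and> m \<notin> S then 1 else 0)))"
      using IH by (simp split: if_splits)
  next
    case True
    show "Suc D * (N + (if Suc m \<in> S \<and> \<not> Suc D dvd Suc m then 1 else 0)) +
      (if Suc m \<in> S then D - Suc m mod Suc D else 0)
      \<le> D * (P + ((if Suc m \<in> S then 1 else 0) + (if Suc m \<in> S \<and> m \<notin> S then 1 else 0)))"
    proof (cases "m \<in> S")
      case mS: True
      show ?thesis
      proof (cases "Suc (m mod Suc D) = Suc D")
        case True
        then have "Suc D dvd Suc m" using ms dv by simp
        then show ?thesis using IH mS \<open>Suc m \<in> S\<close> ms True by (simp add: algebra_simps)
      next
        case False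
        then have "\<not> Suc D dvd Suc m" using ms dv by simp
        moreover have "m mod Suc D \<le> D" using mlt by linarith
        moreover have "Suc (m mod Suc D) \<le> D" using False mlt by linarith
        then obtain r where r: "D = Suc (m mod Suc D) + r" using le_Suc_ex by blast
        have e1: "D - Suc (m mod Suc D) = r" "D - m mod Suc D = Suc r" using r by simp_all
        show ?thesis using e1 IH using IH mS \<open>Suc m \<in> S\<close> ms False \<open>\<not> Suc D dvd Suc m\<close>
          by (simp add: algebra_simps)
      qed
    next
      case mS: False
      show ?thesis
      proof (cases "Suc D dvd Suc m")
        case True
        then show ?thesis using IH mS \<open>Suc m \<in> S\<close> by (simp add: algebra_simps)
      next
        case False
        then have "Suc m mod Suc D \<ge> 1" using dv by simp
        moreover have "Suc m mod Suc D \<le> D" using mod_less_divisor[of "Suc D" "Suc m"] by linarith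
        then obtain r where r: "D = Suc m mod Suc D + r" using le_Suc_ex by blast
        have e1: "D - Suc m mod Suc D = r" using r by simp_all
        show ?thesis using e1 r using IH mS \<open>Suc m \<in> S\<close> False \<open>Suc m mod Suc D \<ge> 1\<close>
          by (simp add: algebra_simps)
      qed
    qed
  qed
qed



lemma card_filter_sum:
  fixes N :: nat assumes "S \<subseteq> {0..N}"
  shows "card {v \<in> S. P v} = (\<Sum>u\<in>{0..N}. if u \<in> S \<and> P u then 1 else 0)"
proof -
  have "(\<Sum>u\<in>{0..N}. if u \<in> S \<and> P u then 1 else (0::nat)) = (\<Sum>u\<in>{0..N} \<inter> {v. v \<in> S \<and> P v}. 1)"
    by (subst sum.inter_restrict) auto
  also have "{0..N} \<inter> {v. v \<in> S \<and> P v} = {v \<in> S. P v}" using assms by auto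
  finally show ?thesis by simp
qed

lemma nonmult_bound:
  assumes T: "valid 0 N T" "height T \<le> k" and d: "d \<ge> 2" "d dvd N" "d dvd c"
    and ck: "2 ^ k = c + 2"
  shows "card {v \<in> cov 0 N T. \<not> d dvd v} \<le> (c div d) * (d - 1)"
proof -
  define S where "S = cov 0 N T"
  have Ss: "S \<subseteq> {0..N}" using cov_sub[OF T(1)] S_def by simp
  obtain D where D: "d = Suc D" using d by (cases d) auto
  obtain c' where c': "c = d * c'" using d by blast
  have Nm: "N mod Suc D = 0" using d D by simp
  define Nn where "Nn = card {v \<in> S. \<not> d dvd v}"
  have Nn: "Nn = (\<Sum>u\<in>{0..N}. if u \<in> S \<and> \<not> Suc D dvd u then 1 else 0)"
    unfolding Nn_def D by (rule card_filter_sum[OF Ss])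
  define P where "P = (\<Sum>u\<in>{0..N}. qt S 0 u)"
  have sw0: "Suc D * Nn + (if N \<in> S then D - N mod Suc D else 0) \<le> D * P"
    using sweep[where D=D and m=N and S=S] unfolding Nn P_def .
  have sw: "Suc D * Nn + (if N \<in> S then D else 0) \<le> D * P"
    using sw0 unfolding Nm by (cases "N \<in> S") auto
  have Q: "P + (if N \<in> S then 0 else 1) \<le> c + 2"
    using Qv_tree[OF T] ck unfolding Qv_def P_def S_def by simp
  have "D * (P + (if N \<in> S then 0 else 1)) \<le> D * (c + 2)" using Q by (rule mult_le_mono2)
  then have "Suc D * Nn + D \<le> D * (c + 2)" using sw by (simp split: if_splits add: algebra_simps)
  then have "Suc D * Nn < Suc D * (D * c' + 1)" using c' D by (simp add: algebra_simps)
  then have "Nn < D * c' + 1" by (rule mult_less_cancel1[THEN iffD1, THEN conjunct2])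
  moreover have "c div d = c'" using c' d by simp
  ultimately show ?thesis using D unfolding Nn_def S_def by (simp add: mult.commute)
qed



lemma ival_char:
  assumes "v < n" "0 < l" "l < n"
  shows "(x \<in> ival v l n \<and> (x + n - 1) mod n \<notin> ival v l n) \<longleftrightarrow> x = v"
proof
  assume x: "x = v"
  have "v \<in> ival v l n" unfolding ival_def using assms by (auto intro!: exI[of _ v])
  moreover have "(v + n - 1) mod n \<notin> ival v l n"
  proof
    assume "(v + n - 1) mod n \<in> ival v l n"
    then obtain t where t: "v \<le> t" "t < v + l" "(v + n - 1) mod n = t mod n" unfolding ival_def by auto
    show False
    proof (cases "v = 0")
      case True
      then show False using t assms by simp
    next
      case False
      then have "(v + n - 1) mod n = v - 1" using assms
        by (metis Nat.add_diff_assoc2 add.commute diff_less less_imp_diff_less less_one linorder_not_less mod_add_self1 mod_less zero_less_diff)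
      moreover have "t mod n = (if t < n then t else t - n)" using t assms by (simp add: mod_if le_mod_geq)
      ultimately show False using t assms False by (auto split: if_splits)
    qed
  qed
  ultimately show "x \<in> ival v l n \<and> (x + n - 1) mod n \<notin> ival v l n" using x by simp
next
  assume h: "x \<in> ival v l n \<and> (x + n - 1) mod n \<notin> ival v l n"
  then obtain t where t: "v \<le> t" "t < v + l" "x = t mod n" unfolding ival_def by auto
  show "x = v"
  proof (cases "t = v")
    case True then show ?thesis using t assms by simp
  next
    case False
    then have "t - 1 \<in> {s. v \<le> s \<and> s < v + l}" using t by auto
    then have "(t - 1) mod n \<in> ival v l n" unfolding ival_def by blast
    moreover have "(x + n - 1) mod n = (t - 1) mod n"
    proof -
      have "(x + n - 1) mod n = (t mod n + (n - 1)) mod n" using t assms by simp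
      also have "\<dots> = (t + (n - 1)) mod n" by (simp add: mod_add_left_eq)
      also have "t + (n - 1) = (t - 1) + n" using False t assms by simp
      finally show ?thesis by simp
    qed
    ultimately show ?thesis using h by simp
  qed
qed

lemma ival_inj:
  assumes "v1 < n" "v2 < n" "0 < l1" "l1 < n" "0 < l2" "l2 < n" "ival v1 l1 n = ival v2 l2 n"
  shows "v1 = v2"
  using ival_char[of v1 n l1 v1] ival_char[of v2 n l2 v1] assms by simp

lemma Tv_cover_inj:
  assumes "v1 < n" "v2 < n" "0 < c" "c + 1 < n" "Tv_cover n c v1 = Tv_cover n c v2"
  shows "v1 = v2"
proof -
  have e: "\<And>v. Tv_cover n c v = ival v (if ival v (c+1) n \<inter> {0, n-1} \<noteq> {} then c+1 else c) n"
    by (simp add: Tv_cover_def)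
  show ?thesis
    apply (rule ival_inj[of v1 n v2 "if ival v1 (c+1) n \<inter> {0, n-1} \<noteq> {} then c+1 else c"
            "if ival v2 (c+1) n \<inter> {0, n-1} \<noteq> {} then c+1 else c"])
    using assms e by (auto simp del: Tv_cover_def)
qed



locale gsetup =
  fixes n N c d w c' :: nat
  assumes nN: "n = Suc N" and d2: "2 \<le> d" and dgcd: "d = gcd c N" and cw: "c = c' * d"
    and nw: "N = w * d" and cn: "c + 2 < n" and c2: "2 \<le> c"
begin

lemma Npos: "c + 1 < N" using cn nN by simp

lemma c'pos: "0 < c'" using cw c2 by (cases c') auto

lemma coprime_cw: "coprime c' w"
proof -
  have "d * gcd c' w = gcd (d * c') (d * w)" by (rule gcd_mult_distrib_nat)
  also have "\<dots> = d" using dgcd cw nw by (simp add: mult.commute)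
  finally have "d * gcd c' w = d * 1" by simp
  then have "gcd c' w = 1" using d2 by (simp del: mult_1_right)
  then show ?thesis by (simp add: coprime_iff_gcd_eq_1)
qed

lemma gseq_eq: "gseq n c j = (1 + Suc j * c) mod N"
proof (induction j)
  case 0
  then show ?case using Npos by simp
next
  case (Suc j)
  have "gseq n c (Suc j) = (gseq n c j + c) mod N" using nN by simp
  also have "\<dots> = ((1 + Suc j * c) mod N + c) mod N" using Suc by simp
  also have "\<dots> = (1 + Suc j * c + c) mod N" by (simp add: mod_add_left_eq)
  also have "1 + Suc j * c + c = 1 + Suc (Suc j) * c" by simp
  finally show ?case .
qed

lemma not1: assumes "0 < m" "m < w" shows "(1 + m * c) mod N \<noteq> 1"
proof
  assume h: "(1 + m * c) mod N = 1"
  have "1 mod N = 1" using Npos by simp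
  then have "N dvd (1 + m * c) - 1" using h mod_eq_dvd_iff_nat[of 1 "1 + m*c" N] by simp
  then have "w * d dvd (m * c') * d" using nw cw by (simp add: mult.assoc)
  then have "w dvd m * c'" using d2 by simp
  then have "w dvd m" using coprime_cw by (simp add: coprime_commute coprime_dvd_mult_left_iff)
  then show False using assms by (simp add: nat_dvd_not_less)
qed

lemma not0: "(1 + m * c) mod N \<noteq> 0"
proof
  assume "(1 + m * c) mod N = 0"
  then have "N dvd 1 + m * c" by (simp add: dvd_eq_mod_eq_0)
  moreover have "d dvd N" using nw by simp
  ultimately have "d dvd 1 + m * c" using dvd_trans by blast
  moreover have "d dvd m * c" using cw by simp
  ultimately have "d dvd (1 + m * c) - m * c" by (rule dvd_diff_nat)
  then have "d dvd 1" by simp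
  then show False using d2 by simp
qed

lemma at_w: "(1 + w * c) mod N = 1"
proof -
  have "w * c = c' * N" using cw nw by simp
  have "(1 + c' * N) mod N = 1 mod N" by (simp only: mod_mult_self1)
  then show ?thesis using Npos \<open>w * c = c' * N\<close> by simp
qed

definition vm :: "nat \<Rightarrow> nat" where
  "vm m = (if m = 0 then 0 else (1 + m * c) mod N)"

lemma greedy_verts_eq: "greedy_verts n c = vm ` {..<w}"
proof
  show "greedy_verts n c \<subseteq> vm ` {..<w}"
  proof
    fix v assume "v \<in> greedy_verts n c"
    then consider "v = 0" | j where "v = gseq n c j" "\<forall>i\<le>j. gseq n c i \<notin> {0, 1}"
      unfolding greedy_verts_def by blast
    then show "v \<in> vm ` {..<w}"
    proof cases
      case 1
      have "0 < w" using nw Npos by (cases w) auto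
      then show ?thesis using 1 by (auto simp: vm_def image_iff intro!: bexI[of _ 0])
    next
      case 2
      have "Suc j < w"
      proof (rule ccontr)
        assume "\<not> Suc j < w"
        then have "w - 1 \<le> j" by simp
        moreover have "gseq n c (w - 1) = 1"
        proof -
          have "0 < w" using nw Npos by (cases w) auto
          then have "Suc (w - 1) = w" by simp
          then show ?thesis using gseq_eq[of "w-1"] at_w by simp
        qed
        ultimately show False using 2 by auto
      qed
      then show ?thesis using 2 gseq_eq[of j] by (auto simp: vm_def image_iff intro!: bexI[of _ "Suc j"])
    qed
  qed
next
  show "vm ` {..<w} \<subseteq> greedy_verts n c"
  proof
    fix v assume "v \<in> vm ` {..<w}"
    then obtain m where m: "m < w" "v = vm m" by auto
    show "v \<in> greedy_verts n c"
    proof (cases m)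
      case 0 then show ?thesis using m by (simp add: vm_def greedy_verts_def)
    next
      case (Suc j)
      have "\<forall>i\<le>j. gseq n c i \<notin> {0, 1}"
      proof (intro allI impI)
        fix i assume "i \<le> j"
        then have "0 < Suc i" "Suc i < w" using Suc m by simp_all
        then show "gseq n c i \<notin> {0, 1}" using not0[of "Suc i"] not1[of "Suc i"] gseq_eq[of i] by simp
      qed
      moreover have "v = gseq n c j" using m Suc gseq_eq by (simp add: vm_def)
      ultimately show ?thesis unfolding greedy_verts_def by blast
    qed
  qed
qed

lemma vm_range: "m < w \<Longrightarrow> vm m < N \<and> vm m \<noteq> 1"
  using not1[of m] Npos by (auto simp: vm_def)

lemma vm_inj: "inj_on vm {..<w}"
proof
  fix m1 m2 assume m: "m1 \<in> {..<w}" "m2 \<in> {..<w}" "vm m1 = vm m2"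
  show "m1 = m2"
  proof (cases "m1 = 0 \<or> m2 = 0")
    case True
    show ?thesis
    proof (cases "m1 = 0")
      case True
      then show ?thesis using m not0[of m2] by (cases "m2 = 0") (auto simp: vm_def)
    next
      case False
      then show ?thesis using m not0[of m1] \<open>m1 = 0 \<or> m2 = 0\<close> by (auto simp: vm_def)
    qed
  next
    case False
    have key: "a < b \<Longrightarrow> b < w \<Longrightarrow> (1 + a * c) mod N \<noteq> (1 + b * c) mod N" for a b
    proof
      assume ab: "a < b" "b < w" "(1 + a * c) mod N = (1 + b * c) mod N"
      have "a * c \<le> b * c" using ab by simp
      then have "N dvd (1 + b * c) - (1 + a * c)" using ab mod_eq_dvd_iff_nat[of "1 + a*c" "1 + b*c" N] by simp
      then have "N dvd (b - a) * c" by (simp add: diff_mult_distrib)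
      then have "w * d dvd ((b - a) * c') * d" using nw cw by (simp add: mult.assoc)
      then have "w dvd (b - a) * c'" using d2 by simp
      then have "w dvd (b - a)" using coprime_cw by (simp add: coprime_commute coprime_dvd_mult_left_iff)
      moreover have "0 < b - a" "b - a < w" using ab by auto
      ultimately show False by (simp add: nat_dvd_not_less)
    qed
    have eq: "(1 + m1 * c) mod N = (1 + m2 * c) mod N" using m False by (simp add: vm_def)
    show ?thesis
    proof (rule ccontr)
      assume "m1 \<noteq> m2"
      then consider "m1 < m2" | "m2 < m1" by linarith
      then show False using key[of m1 m2] key[of m2 m1] m eq by cases auto
    qed
  qed
qed

end



lemma ivalI: "v \<le> t \<Longrightarrow> t < v + l \<Longrightarrow> x = t mod n \<Longrightarrow> x \<in> ival v l n"
  unfolding ival_def by blast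

lemma ival_sub_cover: "ival v c n \<subseteq> Tv_cover n c v"
  unfolding Tv_cover_def ival_def by auto

lemma ival_cover_big: "n - 1 \<in> ival v (c+1) n \<Longrightarrow> Tv_cover n c v = ival v (c+1) n"
  unfolding Tv_cover_def by auto

lemma ival_cover_big0: "0 \<in> ival v (c+1) n \<Longrightarrow> Tv_cover n c v = ival v (c+1) n"
  unfolding Tv_cover_def by auto

lemma mod_add_inj:
  fixes N :: nat
  assumes "a < N" "b < N" "(x + a) mod N = (x + b) mod N" shows "a = b"
proof -
  have *: "a \<le> b \<Longrightarrow> b < N \<Longrightarrow> (x + a) mod N = (x + b) mod N \<Longrightarrow> a = b" for a b
  proof -
    assume ab: "a \<le> b" "b < N" "(x + a) mod N = (x + b) mod N"
    then have "N dvd (x + b) - (x + a)" using mod_eq_dvd_iff_nat[of "x + a" "x + b" N] by simp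
    then have "N dvd b - a" by simp
    moreover have "b - a < N" using ab by linarith
    ultimately have "b - a = 0" using nat_dvd_not_less by blast
    then show "a = b" using ab by simp
  qed
  show ?thesis using *[of a b] *[of b a] assms by (cases "a \<le> b") auto
qed

context gsetup begin

lemma block:
  assumes m: "m < w" and i: "i < c"
  shows "(1 + m*c + i) mod N \<in> Tv_cover n c (vm m) \<and>
         ((1 + m*c + i) mod N = 0 \<longrightarrow> N \<in> Tv_cover n c (vm m))"
proof (cases "m = 0")
  case True
  have u: "(1 + m*c + i) mod N = 1 + i" using True i Npos by simp
  have "0 \<in> ival 0 (c+1) n" by (rule ivalI[of 0 0]) auto
  then have cov: "Tv_cover n c 0 = ival 0 (c+1) n" by (rule ival_cover_big0)
  have "1 + i \<in> ival 0 (c+1) n" by (rule ivalI[of 0 "1+i"]) (use i cn in auto)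
  then show ?thesis using u cov True by (simp add: vm_def)
next
  case False
  define v where "v = (1 + m * c) mod N"
  have vm: "vm m = v" using False by (simp add: vm_def v_def)
  have vN: "v < N" using Npos v_def by simp
  have v2: "v \<noteq> 0" "v \<noteq> 1" using not0[of m] not1[of m] False m v_def by auto
  have u: "(1 + m*c + i) mod N = (v + i) mod N" unfolding v_def by (simp add: mod_add_left_eq)
  show ?thesis
  proof (cases "v + i < N")
    case True
    then have "(v + i) mod N = v + i" by simp
    moreover have "v + i \<in> ival v c n" by (rule ivalI[of v "v+i"]) (use True i nN in auto)
    ultimately show ?thesis using u vm v2 ival_sub_cover[of v c n] by auto
  next
    case False
    have "(v + i) mod N = v + i - N" using False vN i Npos
      by (simp add: le_mod_geq)
    have Nin: "N \<in> ival v (c+1) n" by (rule ivalI[of v N]) (use False vN i nN in auto)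
    then have cov: "Tv_cover n c v = ival v (c+1) n" using ival_cover_big[of n v c] nN by simp
    have "v + i - N \<in> ival v (c+1) n"
      by (rule ivalI[of v "v + i + 1"]) (use False vN i nN Npos in \<open>auto simp: le_mod_geq\<close>)
    then show ?thesis using u vm cov Nin \<open>(v + i) mod N = v + i - N\<close> by simp
  qed
qed

lemma c'_lt_w: "c' < w"
proof -
  have "c' * d < w * d" using cw nw Npos by linarith
  then show ?thesis using mult_less_cancel2 by blast
qed

lemma count:
  assumes u: "u < N"
  shows "c' \<le> card {m \<in> {..<w}. \<exists>i<c. (1 + m*c + i) mod N = u}"
proof -
  define r where "r = (u + d - 1) mod d"
  define Q where "Q = (u + d - 1) div d"
  have rQ: "u + d - 1 = d * Q + r" unfolding r_def Q_def by simp
  have rd: "r < d" using d2 r_def by simp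
  define it where "it t = t * d + r" for t
  have it_lt: "it t < c" if "t < c'" for t
  proof -
    have "Suc t \<le> c'" using that by simp
    then have "Suc t * d \<le> c' * d" by (rule mult_le_mono1)
    then show ?thesis using rd cw unfolding it_def by simp
  qed
  have ex: "\<exists>m<w. (1 + m*c + it t) mod N = u" if t: "t < c'" for t
  proof -
    define Y where "Y = u + 2 * N - 1 - it t"
    have itN: "it t < N" using it_lt[OF t] Npos by simp
    have "Suc t \<le> w" using t c'_lt_w by simp
    then have "Suc t * d \<le> w * d" by (rule mult_le_mono1)
    then have tw: "t * d + d \<le> w * d" by simp
    have "Y + d + t * d = d * Q + 2 * (w * d)"
      unfolding Y_def it_def using rQ nw itN it_def d2 by simp
    then have "d dvd Y + (d + t * d)" by (simp add: add.assoc)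
    moreover have "d dvd d + t * d" by simp
    ultimately have "d dvd Y" by (simp add: dvd_add_left_iff)
    then obtain q where q: "Y = d * q" by blast
    have c0: "c \<noteq> 0" using c2 by simp
    obtain x y where xy: "c * x = N * y + gcd c N" using bezout_nat[OF c0] by blast
    then have "c * x * q = (N * y + d) * q" using dgcd by simp
    then have xy': "c * (x * q) = N * (y * q) + Y" using q by (simp add: algebra_simps)
    define m where "m = (x * q) mod w"
    have mw: "m < w" using c'_lt_w m_def by simp
    define K where "K = x * q div w"
    have "x * q = w * K + m" unfolding m_def K_def by simp
    then have "c * (x * q) = c * (w * K + m)" by simp
    also have "\<dots> = N * (c' * K) + m * c" using cw nw by (simp add: algebra_simps)
    finally have e1: "c * (x * q) = N * (c' * K) + m * c" .
    have "(m * c) mod N = (N * (c' * K) + m * c) mod N" by simp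
    also have "\<dots> = (N * (y * q) + Y) mod N" using e1 xy' by simp
    also have "\<dots> = Y mod N" by simp
    finally have mY: "(m * c) mod N = Y mod N" .
    have "((1 + it t) + (m * c) mod N) mod N = ((1 + it t) + m * c) mod N"
      by (rule mod_add_right_eq)
    moreover have "(1 + it t) + m * c = 1 + m * c + it t" by simp
    ultimately have "(1 + m * c + it t) mod N = ((1 + it t) + (m * c) mod N) mod N"
      by (metis add.commute)
    also have "\<dots> = ((1 + it t) + Y mod N) mod N" using mY by simp
    also have "\<dots> = (1 + it t + Y) mod N" by (rule mod_add_right_eq)
    finally have "(1 + m * c + it t) mod N = (1 + it t + Y) mod N" .
    also have "1 + it t + Y = u + N * 2" unfolding Y_def using itN by simp
    also have "(u + N * 2) mod N = u" using u by simp
    finally show ?thesis using mw by blast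
  qed
  then obtain f where f: "\<And>t. t < c' \<Longrightarrow> f t < w \<and> (1 + f t * c + it t) mod N = u"
    by metis
  have inj: "inj_on f {..<c'}"
  proof
    fix t1 t2 assume t: "t1 \<in> {..<c'}" "t2 \<in> {..<c'}" "f t1 = f t2"
    have "(1 + f t1 * c + it t1) mod N = u" "(1 + f t2 * c + it t2) mod N = u" using f[of t1] f[of t2] t(1) t(2) by auto
    then have "(1 + f t1 * c + it t1) mod N = (1 + f t1 * c + it t2) mod N" using t(3) by simp
    moreover have "it t1 < N" "it t2 < N" using it_lt t Npos by fastforce+
    ultimately have "it t1 = it t2" using mod_add_inj[of "it t1" N "it t2" "1 + f t1 * c"] by simp
    then show "t1 = t2" unfolding it_def using d2 by simp
  qed
  have "f ` {..<c'} \<subseteq> {m \<in> {..<w}. \<exists>i<c. (1 + m*c + i) mod N = u}"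
    using f it_lt by blast
  from card_inj_on_le[OF inj this] show ?thesis by simp
qed

end



fun trs :: "nat \<Rightarrow> nat \<Rightarrow> stree set" where
  "trs n 0 = {Leaf}"
| "trs n (Suc k) = insert Leaf ((\<lambda>(e, L, R). Node e L R) ` ({..<n} \<times> trs n k \<times> trs n k))"

lemma finite_trs: "finite (trs n k)"
  by (induction k) auto

lemma in_trs: "valid a b T \<Longrightarrow> b < n \<Longrightarrow> height T \<le> k \<Longrightarrow> T \<in> trs n k"
proof (induction T arbitrary: a b k)
  case Leaf
  then show ?case by (cases k) auto
next
  case (Node e L R)
  then obtain k' where k: "k = Suc k'" by (cases k) auto
  have "L \<in> trs n k'" using Node.IH(1)[of a e k'] Node.prems k by auto
  moreover have "R \<in> trs n k'" using Node.IH(2)[of "Suc e" b k'] Node.prems k by auto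
  moreover have "e < n" using Node.prems by auto
  ultimately show ?case using k by (auto simp: image_iff)
qed

lemma finite_strategies: "0 < n \<Longrightarrow> finite (strategies n k)"
proof -
  assume n: "0 < n"
  have "strategies n k \<subseteq> trs n k" unfolding strategies_def using in_trs n by auto
  then show ?thesis using finite_trs finite_subset by blast
qed

lemma C_sub: "0 < n \<Longrightarrow> T \<in> strategies n k \<Longrightarrow> C n T \<subseteq> {0..<n}"
proof -
  assume n: "0 < n" "T \<in> strategies n k"
  then have "cov 0 (n - 1) T \<subseteq> {0..n-1}" unfolding strategies_def using cov_sub by blast
  also have "{0..n-1} \<subseteq> {0..<n}" using n by auto
  finally show ?thesis unfolding C_def .
qed

context gsetup begin

lemma cover_count:
  assumes Tv: "\<And>v. v \<in> {0..<n} - {1} \<Longrightarrow> C n (Tv v) = Tv_cover n c v" and u: "u < n"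
  shows "c' \<le> card {T \<in> Tv ` greedy_verts n c. u \<in> C n T}"
proof -
  define u' where "u' = u mod N"
  have u'N: "u' < N" using Npos u'_def by simp
  define M where "M = {m \<in> {..<w}. \<exists>i<c. (1 + m*c + i) mod N = u'}"
  have cM: "c' \<le> card M" unfolding M_def by (rule count[OF u'N])
  have vmr: "m < w \<Longrightarrow> vm m \<in> {0..<n} - {1}" for m using vm_range[of m] nN by auto
  have inj: "inj_on (\<lambda>m. Tv (vm m)) M"
  proof
    fix m1 m2 assume m: "m1 \<in> M" "m2 \<in> M" "Tv (vm m1) = Tv (vm m2)"
    then have w: "m1 < w" "m2 < w" unfolding M_def by auto
    have "Tv_cover n c (vm m1) = Tv_cover n c (vm m2)" using Tv[OF vmr[OF w(1)]] Tv[OF vmr[OF w(2)]] m(3) by simp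
    then have "vm m1 = vm m2" using Tv_cover_inj[of "vm m1" n "vm m2" c] vmr[OF w(1)] vmr[OF w(2)] c2 cn by simp
    then show "m1 = m2" using vm_inj w by (auto dest: inj_onD)
  qed
  have sub: "(\<lambda>m. Tv (vm m)) ` M \<subseteq> {T \<in> Tv ` greedy_verts n c. u \<in> C n T}"
  proof
    fix T assume "T \<in> (\<lambda>m. Tv (vm m)) ` M"
    then obtain m i where m: "m < w" "i < c" "(1 + m*c + i) mod N = u'" "T = Tv (vm m)" unfolding M_def by auto
    have "T \<in> Tv ` greedy_verts n c" using m greedy_verts_eq by auto
    moreover have "u \<in> Tv_cover n c (vm m)"
    proof (cases "u < N")
      case True then show ?thesis using block[OF m(1) m(2)] m(3) u'_def by simp
    next
      case False then have "u = N" using u nN by auto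
      then have "u' = 0" using u'_def by simp
      then show ?thesis using block[OF m(1) m(2)] m(3) \<open>u = N\<close> by simp
    qed
    ultimately show "T \<in> {T \<in> Tv ` greedy_verts n c. u \<in> C n T}" using Tv[OF vmr[OF m(1)]] m(4) by simp
  qed
  have fin: "finite {T \<in> Tv ` greedy_verts n c. u \<in> C n T}" using greedy_verts_eq by simp
  have "card M \<le> card {T \<in> Tv ` greedy_verts n c. u \<in> C n T}"
    using card_inj_on_le[OF inj sub fin] .
  then show ?thesis using cM by simp
qed

end



lemma sum_y:
  fixes K :: real
  assumes "finite S"
  shows "(\<Sum>v\<in>S. if d dvd v then 0 else K) = K * real (card {v \<in> S. \<not> d dvd v})"
proof -
  have "(\<Sum>v\<in>S. if d dvd v then 0 else K) = (\<Sum>v\<in>S. if \<not> d dvd v then K else 0)"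
    by (rule sum.cong) auto
  also have "\<dots> = (\<Sum>v\<in>{v \<in> S. \<not> d dvd v}. K)" using assms by (rule sum.inter_filter[symmetric])
  finally show ?thesis by (simp add: mult.commute)
qed

lemma card_mult:
  fixes d w :: nat
  assumes "0 < d"
  shows "card {v \<in> {0..<w*d+1}. d dvd v} = w + 1"
proof -
  have "{v \<in> {0..<w*d+1}. d dvd v} = (\<lambda>q. d * q) ` {0..w}"
  proof
    show "{v \<in> {0..<w*d+1}. d dvd v} \<subseteq> (\<lambda>q. d * q) ` {0..w}"
    proof
      fix v assume v: "v \<in> {v \<in> {0..<w*d+1}. d dvd v}"
      then obtain q where q: "v = d * q" by auto
      then have "d * q < d * w + 1" using v by (simp add: mult.commute)
      then have "d * q \<le> d * w" by linarith
      then have "q \<le> w" using assms by simp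
      then show "v \<in> (\<lambda>q. d * q) ` {0..w}" using q by auto
    qed
  next
    show "(\<lambda>q. d * q) ` {0..w} \<subseteq> {v \<in> {0..<w*d+1}. d dvd v}"
    proof
      fix v assume "v \<in> (\<lambda>q. d * q) ` {0..w}"
      then obtain q where q: "q \<le> w" "v = d * q" by auto
      then have "d * q \<le> d * w" by simp
      then have "d * q < d * w + 1" by linarith
      then show "v \<in> {v \<in> {0..<w*d+1}. d dvd v}" using q by (simp add: mult.commute)
    qed
  qed
  moreover have "inj_on (\<lambda>q. d * q) {0..w}" using assms by (auto intro: inj_onI)
  ultimately show ?thesis by (simp add: card_image)
qed

theorem theorem3p1:
  fixes k n :: nat and Tv :: "nat \<Rightarrow> stree"
  assumes "k \<ge> 2" and "n > 2 ^ k"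
    and "gcd (2 ^ k - 2) (n - 1) > 1"
    and Tv: "\<And>v. v \<in> {0..<n} - {1} \<Longrightarrow>
               Tv v \<in> strategies n k \<and> C n (Tv v) = Tv_cover n (2 ^ k - 2) v"
  shows "let c = 2 ^ k - 2; d = gcd c (n - 1); w = (n - 1) div d;
             y = (\<lambda>v::nat. if d dvd v then 0 else 1 / (real w * (real d - 1)))
         in prob_dist {0..<n} y
            \<and> (\<forall>T\<in>strategies n k. (\<Sum>v\<in>C n T. y v) \<le> real c / real (n - 1))
            \<and> (MAX T\<in>strategies n k. (\<Sum>v\<in>C n T. y v)) = real c / real (n - 1)
            \<and> nash n k (greedy_x n c Tv) y"
proof -
  define c where "c = (2::nat) ^ k - 2"
  define d where "d = gcd c (n - 1)"
  define w where "w = (n - 1) div d"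
  define K where "K = 1 / (real w * (real d - 1))"
  define y where "y = (\<lambda>v::nat. if d dvd v then 0 else K)"
  define N where "N = n - 1"
  define c' where "c' = c div d"
  have k4: "(4::nat) \<le> 2 ^ k"
  proof -
    have "(2::nat) ^ 2 \<le> 2 ^ k" using assms(1) by (rule power_increasing) simp
    then show ?thesis by simp
  qed
  have c2: "2 \<le> c" and ck: "2 ^ k = c + 2" using k4 unfolding c_def by auto
  have nN: "n = Suc N" using assms(2) N_def by simp
  have d2: "2 \<le> d" using assms(3) unfolding d_def c_def by simp
  have dc: "d dvd c" and dN: "d dvd N" unfolding d_def N_def by auto
  have cw: "c = c' * d" using dc unfolding c'_def by simp
  have nw: "N = w * d" using dN unfolding w_def N_def by simp
  have cn: "c + 2 < n" using assms(2) ck by simp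
  interpret gsetup n N c d w c'
    by (rule gsetup.intro) (fact nN, fact d2, simp add: d_def N_def, fact cw, fact nw, fact cn, fact c2)
  have TvS: "\<And>v. v \<in> {0..<n} - {1} \<Longrightarrow> Tv v \<in> strategies n k \<and> C n (Tv v) = Tv_cover n c v"
    unfolding c_def by (rule Tv)
  have n0: "0 < n" using nN by simp
  have wpos: "0 < w" using nw Npos by (cases w) auto
  have Kpos: "0 < K" unfolding K_def using wpos d2 by simp
  define bnd where "bnd = real c / real (n - 1)"
  have bnd: "bnd = real c' / real w"
    unfolding bnd_def using cw nw N_def d2 by simp
  have KK: "K * (real c' * (real d - 1)) = bnd"
    unfolding bnd K_def using d2 wpos by (simp add: field_simps)
  define strat where "strat = strategies n k"
  have fin: "finite strat" unfolding strat_def using finite_strategies n0 by simp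
  define val where "val T = (\<Sum>v\<in>C n T. y v)" for T
  have val_eq: "val T = K * real (card {v \<in> C n T. \<not> d dvd v})" if "T \<in> strat" for T
  proof -
    have "finite (C n T)" using C_sub[OF n0] that strat_def finite_subset by blast
    then show ?thesis unfolding val_def y_def by (rule sum_y)
  qed
  have val_le: "val T \<le> bnd" if T: "T \<in> strat" for T
  proof -
    have v: "valid 0 N T" "height T \<le> k" using T unfolding strat_def strategies_def N_def by auto
    have "card {v \<in> cov 0 N T. \<not> d dvd v} \<le> c div d * (d - 1)"
      by (rule nonmult_bound[OF v d2 dN dc ck])
    then have "real (card {v \<in> cov 0 N T. \<not> d dvd v}) \<le> real (c div d) * real (d - 1)"
      by (metis of_nat_le_iff of_nat_mult)
    moreover have "real (d - 1) = real d - 1" using d2 by (simp add: of_nat_diff)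
    ultimately have "real (card {v \<in> C n T. \<not> d dvd v}) \<le> real c' * (real d - 1)"
      unfolding C_def N_def c'_def by simp
    then have "val T \<le> K * (real c' * (real d - 1))"
      using val_eq[OF T] Kpos by (simp add: mult_left_mono)
    then show ?thesis using KK by simp
  qed
  have ycard: "card {v \<in> {0..<n}. \<not> d dvd v} = w * (d - 1)"
  proof -
    have n': "n = w * d + 1" using nN nw by simp
    have "{v \<in> {0..<n}. \<not> d dvd v} = {0..<n} - {v \<in> {0..<n}. d dvd v}" by auto
    moreover have "card ({0..<n} - {v \<in> {0..<n}. d dvd v}) = card {0..<n} - card {v \<in> {0..<n}. d dvd v}"
      by (rule card_Diff_subset) auto
    moreover have "card {v \<in> {0..<n}. d dvd v} = w + 1" using card_mult[of d w] d2 n' by simp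
    ultimately have "card {v \<in> {0..<n}. \<not> d dvd v} = n - (w + 1)" by simp
    also have "\<dots> = w * (d - 1)" using n' by (simp add: diff_mult_distrib2)
    finally show ?thesis .
  qed
  have yprob: "prob_dist {0..<n} y"
  proof -
    have "(\<Sum>v\<in>{0..<n}. y v) = K * real (w * (d - 1))"
      unfolding y_def using sum_y[of "{0..<n}" d K] ycard by simp
    also have "\<dots> = 1" unfolding K_def using wpos d2 by (simp add: of_nat_diff)
    finally show ?thesis unfolding prob_dist_def y_def using Kpos by auto
  qed
  define G where "G = greedy_set n c Tv"
  have G_eq: "G = (\<lambda>m. Tv (vm m)) ` {..<w}" unfolding G_def greedy_set_def greedy_verts_eq by auto
  have vmr: "m < w \<Longrightarrow> vm m \<in> {0..<n} - {1}" for m using vm_range[of m] nN by auto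
  have Gsub: "G \<subseteq> strat" unfolding G_eq strat_def using TvS vmr by auto
  have Gfin: "finite G" unfolding G_eq by simp
  have Gcard: "card G \<le> w" unfolding G_eq using card_image_le[of "{..<w}"] by simp
  have T0: "Tv 0 \<in> G" unfolding G_eq using wpos by (auto simp: image_iff vm_def intro!: bexI[of _ 0])
  have Gpos: "0 < card G" using T0 Gfin card_gt_0_iff by blast
  define x where "x = greedy_x n c Tv"
  have x_eq: "x T = (if T \<in> G then 1 / real (card G) else 0)" for T
    unfolding x_def greedy_x_def G_def by simp
  have xprob: "prob_dist strat x"
  proof -
    have "(\<Sum>T\<in>strat. x T) = (\<Sum>T\<in>strat \<inter> G. 1 / real (card G))"
      unfolding x_eq by (rule sum.inter_restrict[symmetric, OF fin])
    also have "strat \<inter> G = G" using Gsub by auto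
    finally show ?thesis unfolding prob_dist_def using Gpos by (auto simp: x_eq)
  qed
  have P1: "payoff n k x' y' = (\<Sum>T\<in>strat. x' T * (\<Sum>v\<in>C n T. y' v))" for x' y'
  proof -
    have "(\<Sum>v\<in>{0..<n}. x' T * y' v * (if v \<in> C n T then 1 else 0)) = x' T * (\<Sum>v\<in>C n T. y' v)"
      if T: "T \<in> strat" for T
    proof -
      have "(\<Sum>v\<in>{0..<n}. x' T * y' v * (if v \<in> C n T then 1 else 0))
          = x' T * (\<Sum>v\<in>{0..<n}. if v \<in> C n T then y' v else 0)"
        by (simp add: sum_distrib_left if_distrib cong: if_cong)
      also have "(\<Sum>v\<in>{0..<n}. if v \<in> C n T then y' v else 0) = (\<Sum>v\<in>{0..<n} \<inter> C n T. y' v)"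
        by (rule sum.inter_restrict[symmetric]) simp
      also have "{0..<n} \<inter> C n T = C n T" using C_sub[OF n0] T strat_def by auto
      finally show ?thesis .
    qed
    then show ?thesis unfolding payoff_def strat_def by (simp cong: sum.cong)
  qed
  define p where "p x' v = (\<Sum>T\<in>strat. x' T * (if v \<in> C n T then 1 else 0::real))"
    for x' :: "stree \<Rightarrow> real" and v
  have P2: "payoff n k x' y' = (\<Sum>v\<in>{0..<n}. y' v * p x' v)" for x' y'
    unfolding payoff_def p_def strat_def
    by (subst sum.swap) (simp add: sum_distrib_left algebra_simps)
  have p_ge: "bnd \<le> p x v" if v: "v < n" for v
  proof -
    have "p x v = (\<Sum>T\<in>strat. if T \<in> {T \<in> G. v \<in> C n T} then 1 / real (card G) else 0)"
      unfolding p_def x_eq by (rule sum.cong) auto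
    also have "\<dots> = (\<Sum>T\<in>strat \<inter> {T \<in> G. v \<in> C n T}. 1 / real (card G))"
      by (rule sum.inter_restrict[symmetric, OF fin])
    also have "strat \<inter> {T \<in> G. v \<in> C n T} = {T \<in> G. v \<in> C n T}" using Gsub by auto
    finally have pe: "p x v = real (card {T \<in> G. v \<in> C n T}) / real (card G)" by simp
    have cc: "c' \<le> card {T \<in> G. v \<in> C n T}"
      unfolding G_def greedy_set_def using cover_count[of Tv v] TvS v by blast
    have "bnd = real c' / real w" by (rule bnd)
    also have "\<dots> \<le> real c' / real (card G)"
      using Gcard Gpos by (simp add: frac_le)
    also have "\<dots> \<le> real (card {T \<in> G. v \<in> C n T}) / real (card G)"
      using cc Gpos by (simp add: divide_right_mono)
    finally show ?thesis using pe by simp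
  qed
  have pay_x'y: "payoff n k x' y \<le> bnd" if x': "prob_dist strat x'" for x'
  proof -
    have "payoff n k x' y = (\<Sum>T\<in>strat. x' T * val T)" unfolding P1 val_def ..
    also have "\<dots> \<le> (\<Sum>T\<in>strat. x' T * bnd)"
      using x' val_le by (intro sum_mono mult_left_mono) (auto simp: prob_dist_def)
    also have "\<dots> = bnd" using x' by (simp add: prob_dist_def sum_distrib_right[symmetric])
    finally show ?thesis .
  qed
  have pay_xy': "bnd \<le> payoff n k x y'" if y': "prob_dist {0..<n} y'" for y'
  proof -
    have "bnd = (\<Sum>v\<in>{0..<n}. y' v * bnd)" using y' by (simp add: prob_dist_def sum_distrib_right[symmetric])
    also have "\<dots> \<le> (\<Sum>v\<in>{0..<n}. y' v * p x v)"
      using y' p_ge by (intro sum_mono mult_left_mono) (auto simp: prob_dist_def)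
    also have "\<dots> = payoff n k x y'" unfolding P2 ..
    finally show ?thesis .
  qed
  have pay_xy: "payoff n k x y = bnd" using pay_x'y[OF xprob] pay_xy'[OF yprob] by simp
  have nash: "nash n k x y"
    unfolding nash_def using xprob yprob pay_x'y pay_xy' pay_xy strat_def by auto
  have sum0: "(\<Sum>T\<in>strat. x T * (bnd - val T)) = 0"
  proof -
    have "(\<Sum>T\<in>strat. x T * (bnd - val T)) = (\<Sum>T\<in>strat. x T * bnd - x T * val T)"
      by (simp add: right_diff_distrib)
    also have "\<dots> = (\<Sum>T\<in>strat. x T * bnd) - (\<Sum>T\<in>strat. x T * val T)"
      by (rule sum_subtractf)
    also have "(\<Sum>T\<in>strat. x T * bnd) = (\<Sum>T\<in>strat. x T) * bnd"
      by (rule sum_distrib_right[symmetric])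
    also have "(\<Sum>T\<in>strat. x T * val T) = bnd" using pay_xy unfolding P1 val_def by simp
    finally show ?thesis using xprob by (simp add: prob_dist_def)
  qed
  have nonneg: "0 \<le> x T * (bnd - val T)" if T: "T \<in> strat" for T
  proof -
    have "0 \<le> x T" unfolding x_eq by simp
    moreover have "0 \<le> bnd - val T" using val_le[OF T] by simp
    ultimately show ?thesis by (rule mult_nonneg_nonneg)
  qed
  have T0s: "Tv 0 \<in> strat" using T0 Gsub by blast
  have "x (Tv 0) * (bnd - val (Tv 0)) = 0"
    using sum_nonneg_0[of strat "\<lambda>T. x T * (bnd - val T)", OF fin nonneg sum0 T0s] .
  moreover have "x (Tv 0) \<noteq> 0" unfolding x_eq using T0 Gpos by simp
  ultimately have v0: "val (Tv 0) = bnd" by simp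
  have maxeq: "(MAX T\<in>strat. val T) = bnd"
  proof (rule Max_eqI)
    show "finite (val ` strat)" using fin by simp
    show "y \<le> bnd" if "y \<in> val ` strat" for y using that val_le by blast
    show "bnd \<in> val ` strat" using v0 T0s by (metis image_eqI)
  qed
  have all: "prob_dist {0..<n} y \<and> (\<forall>T\<in>strat. val T \<le> bnd) \<and> (MAX T\<in>strat. val T) = bnd \<and> nash n k x y"
    using yprob val_le maxeq nash by blast
  show ?thesis
    using all unfolding Let_def strat_def val_def bnd_def x_def y_def K_def w_def d_def c_def .
qed

end
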